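(* Every finite abelian group is completely $D$-realisable.
   Context: All groups are finite. $D(H)=H'$ denotes the derived subgroup of $H$. A finite group $G$ is completely $D$-realisable if there is a finite group $H$ such that: (i) $G\cong D(H)$; (ii) for every subgroup $G_1\leq G$ there exists $H_1\leq H$ with $G_1\cong D(H_1)$; (iii) for every $H_1\leq H$ there exists $G_1\leq G$ with $D(H_1)\cong G_1$. *)

theory Defs
  imports "HOL-Algebra.Algebra"
begin

definition D_of :: "('a, 'b) monoid_scheme \<Rightarrow> 'a set \<Rightarrow> ('a, 'b) monoid_scheme" where
  "D_of H K = H\<lparr>carrier := derived H K\<rparr>"

text \<open>Complete D-realisability. The witness group H is taken with carrier in nat:
  every finite group is isomorphic to one with carrier a subset of nat, so this loses nothing.\<close>
definition completely_D_realisable :: "('a, 'b) monoid_scheme \<Rightarrow> bool" where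
  "completely_D_realisable G \<longleftrightarrow>
    (\<exists>H :: nat monoid. group H \<and> finite (carrier H) \<and>
       G \<cong> D_of H (carrier H) \<and>
       (\<forall>G1. subgroup G1 G \<longrightarrow> (\<exists>H1. subgroup H1 H \<and> G\<lparr>carrier := G1\<rparr> \<cong> D_of H H1)) \<and>
       (\<forall>H1. subgroup H1 H \<longrightarrow> (\<exists>G1. subgroup G1 G \<and> D_of H H1 \<cong> G\<lparr>carrier := G1\<rparr>)))"

end

theory Submission
  imports Defs
begin

definition wr :: "('a,'b) monoid_scheme \<Rightarrow> (('a\<times>'a)\<times>bool) monoid" where
"wr G = \<lparr>carrier = (carrier G \<times> carrier G) \<times> UNIV,
   monoid.mult = (\<lambda>x y. (if snd x then (fst (fst x) \<otimes>\<^bsub>G\<^esub> snd (fst y), snd (fst x) \<otimes>\<^bsub>G\<^esub> fst (fst y))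
                  else (fst (fst x) \<otimes>\<^bsub>G\<^esub> fst (fst y), snd (fst x) \<otimes>\<^bsub>G\<^esub> snd (fst y)), snd x \<noteq> snd y)),
   monoid.one = ((\<one>\<^bsub>G\<^esub>, \<one>\<^bsub>G\<^esub>), False)\<rparr>"

lemma wr_simps:
  "carrier (wr G) = (carrier G \<times> carrier G) \<times> UNIV"
  "((a,b),s) \<otimes>\<^bsub>wr G\<^esub> ((c,d),u) = (if s then (a \<otimes>\<^bsub>G\<^esub> d, b \<otimes>\<^bsub>G\<^esub> c) else (a \<otimes>\<^bsub>G\<^esub> c, b \<otimes>\<^bsub>G\<^esub> d), s \<noteq> u)"
  "\<one>\<^bsub>wr G\<^esub> = ((\<one>\<^bsub>G\<^esub>, \<one>\<^bsub>G\<^esub>), False)"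
  by (simp_all add: wr_def)

definition realises :: "('a,'b) monoid_scheme \<Rightarrow> 'c monoid \<Rightarrow> bool" where
  "realises G H \<longleftrightarrow> group H \<and> finite (carrier H) \<and>
       G \<cong> D_of H (carrier H) \<and>
       (\<forall>G1. subgroup G1 G \<longrightarrow> (\<exists>H1. subgroup H1 H \<and> G\<lparr>carrier := G1\<rparr> \<cong> D_of H H1)) \<and>
       (\<forall>H1. subgroup H1 H \<longrightarrow> (\<exists>G1. subgroup G1 G \<and> D_of H H1 \<cong> G\<lparr>carrier := G1\<rparr>))"

context comm_group begin

lemma wr_group: "group (wr G)"
proof (rule groupI)
  fix x y assume "x \<in> carrier (wr G)" "y \<in> carrier (wr G)"
  then show "x \<otimes>\<^bsub>wr G\<^esub> y \<in> carrier (wr G)"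
    by (cases x; cases y) (auto simp: wr_simps)
next
  show "\<one>\<^bsub>wr G\<^esub> \<in> carrier (wr G)" by (simp add: wr_simps)
next
  fix x y z assume "x \<in> carrier (wr G)" "y \<in> carrier (wr G)" "z \<in> carrier (wr G)"
  then show "x \<otimes>\<^bsub>wr G\<^esub> y \<otimes>\<^bsub>wr G\<^esub> z = x \<otimes>\<^bsub>wr G\<^esub> (y \<otimes>\<^bsub>wr G\<^esub> z)"
    by (cases x; cases y; cases z) (auto simp: wr_simps m_assoc)
next
  fix x assume "x \<in> carrier (wr G)"
  then show "\<one>\<^bsub>wr G\<^esub> \<otimes>\<^bsub>wr G\<^esub> x = x"
    by (cases x) (auto simp: wr_simps)
next
  fix x assume "x \<in> carrier (wr G)"
  then obtain a b s where x: "x = ((a,b),s)" "a \<in> carrier G" "b \<in> carrier G"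
    by (cases x) (auto simp: wr_simps)
  show "\<exists>y\<in>carrier (wr G). y \<otimes>\<^bsub>wr G\<^esub> x = \<one>\<^bsub>wr G\<^esub>"
  proof (cases s)
    case True
    then show ?thesis using x
      by (intro bexI[of _ "((inv b, inv a), True)"]) (auto simp: wr_simps)
  next
    case False
    then show ?thesis using x
      by (intro bexI[of _ "((inv a, inv b), False)"]) (auto simp: wr_simps)
  qed
qed

lemma wr_inv:
  assumes "a \<in> carrier G" "b \<in> carrier G"
  shows "inv\<^bsub>wr G\<^esub> ((a,b),s) = (if s then ((inv b, inv a), True) else ((inv a, inv b), False))"
proof -
  interpret W: group "wr G" by (rule wr_group)
  show ?thesis
  proof (rule W.inv_equality)
    show "(if s then ((inv b, inv a), True) else ((inv a, inv b), False)) \<otimes>\<^bsub>wr G\<^esub> ((a, b), s) = \<one>\<^bsub>wr G\<^esub>"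
      using assms by (auto simp: wr_simps)
  qed (use assms in \<open>auto simp: wr_simps\<close>)
qed


definition emb :: "'a \<Rightarrow> ('a\<times>'a)\<times>bool" where "emb a = ((a, inv a), False)"

lemma emb_hom: "emb \<in> hom G (wr G)"
  by (auto simp: hom_def emb_def wr_simps inv_mult m_comm)

lemma emb_inj: "inj_on emb A"
  by (auto simp: inj_on_def emb_def)

lemma emb_mult: "a \<in> carrier G \<Longrightarrow> b \<in> carrier G \<Longrightarrow> emb (a \<otimes> b) = emb a \<otimes>\<^bsub>wr G\<^esub> emb b"
  using emb_hom by (simp add: hom_mult)

lemma emb_iso:
  assumes "subgroup G1 G" "emb ` G1 = T"
  shows "G\<lparr>carrier := G1\<rparr> \<cong> (wr G)\<lparr>carrier := T\<rparr>"
proof -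
  have "emb \<in> iso (G\<lparr>carrier := G1\<rparr>) ((wr G)\<lparr>carrier := T\<rparr>)"
    unfolding iso_def hom_def bij_betw_def
    using assms subgroup.mem_carrier[OF assms(1)] subgroup.m_closed[OF assms(1)]
    by (auto simp: emb_inj emb_mult)
  then show ?thesis by (rule is_isoI)
qed

definition ww :: "('a\<times>'a)\<times>bool \<Rightarrow> 'a" where "ww x = fst (fst x) \<otimes> snd (fst x)"

lemma commutator_in:
  assumes x: "x \<in> carrier (wr G)" and y: "y \<in> carrier (wr G)"
  shows "x \<otimes>\<^bsub>wr G\<^esub> y \<otimes>\<^bsub>wr G\<^esub> inv\<^bsub>wr G\<^esub> x \<otimes>\<^bsub>wr G\<^esub> inv\<^bsub>wr G\<^esub> y \<in> emb ` carrier G"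
proof -
  interpret W: group "wr G" by (rule wr_group)
  have wm: "ww (p \<otimes>\<^bsub>wr G\<^esub> q) = ww p \<otimes> ww q \<and> snd (p \<otimes>\<^bsub>wr G\<^esub> q) = (snd p \<noteq> snd q)"
    if "p \<in> carrier (wr G)" "q \<in> carrier (wr G)" for p q
    using that by (cases p; cases q) (auto simp: wr_simps ww_def m_ac)
  have wi: "ww (inv\<^bsub>wr G\<^esub> p) = inv ww p \<and> snd (inv\<^bsub>wr G\<^esub> p) = snd p"
    if "p \<in> carrier (wr G)" for p
    using that by (cases p) (auto simp: wr_simps ww_def wr_inv inv_mult m_comm split: if_splits)
  have wc: "ww p \<in> carrier G" if "p \<in> carrier (wr G)" for p
    using that by (cases p) (auto simp: wr_simps ww_def)
  define z where "z = x \<otimes>\<^bsub>wr G\<^esub> y \<otimes>\<^bsub>wr G\<^esub> inv\<^bsub>wr G\<^esub> x \<otimes>\<^bsub>wr G\<^esub> inv\<^bsub>wr G\<^esub> y"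
  have zc: "z \<in> carrier (wr G)" unfolding z_def using x y by simp
  have "ww z = ww x \<otimes> ww y \<otimes> inv ww x \<otimes> inv ww y" and "snd z = False"
    unfolding z_def using x y wm wi by auto
  moreover have "u \<otimes> v \<otimes> inv u \<otimes> inv v = \<one>" if "u \<in> carrier G" "v \<in> carrier G" for u v
  proof -
    have "u \<otimes> v \<otimes> inv u \<otimes> inv v = (u \<otimes> v) \<otimes> (inv u \<otimes> inv v)"
      using that by (simp add: m_assoc)
    also have "\<dots> = (u \<otimes> v) \<otimes> inv (u \<otimes> v)" using that by (simp add: inv_mult)
    also have "\<dots> = \<one>" using that by (simp only: r_inv m_closed)
    finally show ?thesis .
  qed
  ultimately have zw: "ww z = \<one>" using wc x y by simp
  obtain a b where ab: "z = ((a,b), False)" "a \<in> carrier G" "b \<in> carrier G"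
    using zc \<open>snd z = False\<close> by (cases z) (auto simp: wr_simps)
  have "b = inv a" using zw ab by (simp add: ww_def inv_char m_comm)
  then have "z = emb a" using ab by (simp add: emb_def)
  then show ?thesis unfolding z_def using ab by blast
qed


lemma emb_group_hom: "group_hom G (wr G) emb"
  by (simp add: group_hom_def group_hom_axioms_def wr_group emb_hom is_group)

lemma emb_img_subgroup: "subgroup G1 G \<Longrightarrow> subgroup (emb ` G1) (wr G)"
  using group_hom.subgroup_img_is_subgroup[OF emb_group_hom] .

lemma K_subgroup:
  assumes "subgroup G1 G"
  shows "subgroup ((G1 \<times> G1) \<times> UNIV) (wr G)"
proof -
  interpret W: group "wr G" by (rule wr_group)
  note sg = subgroup.mem_carrier[OF assms] subgroup.m_closed[OF assms] subgroup.m_inv_closed[OF assms]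
     subgroup.one_closed[OF assms]
  show ?thesis
  proof (rule W.subgroupI)
    show "(G1 \<times> G1) \<times> UNIV \<subseteq> carrier (wr G)" using sg by (auto simp: wr_simps)
    show "(G1 \<times> G1) \<times> UNIV \<noteq> {}" using sg by auto
    fix a assume "a \<in> (G1 \<times> G1) \<times> (UNIV::bool set)"
    then show "inv\<^bsub>wr G\<^esub> a \<in> (G1 \<times> G1) \<times> UNIV"
      using sg by (cases a) (auto simp: wr_inv)
  next
    fix a b assume "a \<in> (G1 \<times> G1) \<times> (UNIV::bool set)" "b \<in> (G1 \<times> G1) \<times> (UNIV::bool set)"
    then show "a \<otimes>\<^bsub>wr G\<^esub> b \<in> (G1 \<times> G1) \<times> UNIV"
      using sg by (cases a; cases b) (auto simp: wr_simps)
  qed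
qed

lemma derived_sub:
  assumes "S \<subseteq> carrier (wr G)"
  shows "derived (wr G) S \<subseteq> emb ` carrier G"
proof -
  interpret W: group "wr G" by (rule wr_group)
  have "x \<otimes>\<^bsub>wr G\<^esub> y \<otimes>\<^bsub>wr G\<^esub> inv\<^bsub>wr G\<^esub> x \<otimes>\<^bsub>wr G\<^esub> inv\<^bsub>wr G\<^esub> y \<in> emb ` carrier G"
    if "x \<in> S" "y \<in> S" for x y using that assms by (intro commutator_in) auto
  then have "derived_set (wr G) S \<subseteq> emb ` carrier G" by (intro UN_least) simp
  then show ?thesis unfolding derived_def
    by (rule W.generate_subgroup_incl[OF _ emb_img_subgroup[OF subgroup_self]])
qed

lemma derived_K:
  assumes "subgroup G1 G"
  shows "derived (wr G) ((G1 \<times> G1) \<times> UNIV) = emb ` G1"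
proof -
  interpret W: group "wr G" by (rule wr_group)
  note sg = subgroup.mem_carrier[OF assms] subgroup.m_closed[OF assms] subgroup.m_inv_closed[OF assms]
     subgroup.one_closed[OF assms]
  let ?K = "(G1 \<times> G1) \<times> (UNIV::bool set)"
  have KS: "subgroup ?K (wr G)" by (rule K_subgroup[OF assms])
  show ?thesis
  proof
    show "derived (wr G) ?K \<subseteq> emb ` G1"
      unfolding derived_def
    proof (rule W.generate_subgroup_incl[OF _ emb_img_subgroup[OF assms]])
      have "x \<otimes>\<^bsub>wr G\<^esub> y \<otimes>\<^bsub>wr G\<^esub> inv\<^bsub>wr G\<^esub> x \<otimes>\<^bsub>wr G\<^esub> inv\<^bsub>wr G\<^esub> y \<in> emb ` G1"
        if x: "x \<in> ?K" and y: "y \<in> ?K" for x y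
      proof -
      let ?c = "x \<otimes>\<^bsub>wr G\<^esub> y \<otimes>\<^bsub>wr G\<^esub> inv\<^bsub>wr G\<^esub> x \<otimes>\<^bsub>wr G\<^esub> inv\<^bsub>wr G\<^esub> y"
      have xc: "x \<in> carrier (wr G)" "y \<in> carrier (wr G)"
        using x y subgroup.mem_carrier[OF KS] by auto
      have "?c \<in> ?K" using x y
        by (intro subgroup.m_closed[OF KS] subgroup.m_inv_closed[OF KS]) auto
      moreover obtain a where a: "a \<in> carrier G" "?c = emb a"
        using commutator_in[OF xc] by blast
      ultimately have "a \<in> G1" by (simp add: emb_def)
      then show "?c \<in> emb ` G1" using a by blast
      qed
      then show "derived_set (wr G) ?K \<subseteq> emb ` G1" by (intro UN_least) simp
    qed
  next
    show "emb ` G1 \<subseteq> derived (wr G) ?K"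
    proof
      fix z assume "z \<in> emb ` G1"
      then obtain a where a: "a \<in> G1" "z = emb a" by blast
      have ac: "a \<in> carrier G" using a sg by auto
      let ?x = "((a, \<one>), False)" and ?y = "((\<one>, \<one>), True)"
      have "?x \<otimes>\<^bsub>wr G\<^esub> ?y \<otimes>\<^bsub>wr G\<^esub> inv\<^bsub>wr G\<^esub> ?x \<otimes>\<^bsub>wr G\<^esub> inv\<^bsub>wr G\<^esub> ?y = emb a"
        using ac by (simp add: wr_inv wr_simps emb_def)
      moreover have "?x \<in> ?K" "?y \<in> ?K" using a sg by auto
      ultimately have "z \<in> derived_set (wr G) ?K" using a by (intro UN_I[of ?x] UN_I[of ?y]) simp_all
      then show "z \<in> derived (wr G) ?K" unfolding derived_def by (rule generate.incl)
    qed
  qed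
qed


lemma wr_realises:
  assumes fin: "finite (carrier G)"
  shows "realises G (wr G)"
proof -
  interpret W: group "wr G" by (rule wr_group)
  have c: "carrier (wr G) = (carrier G \<times> carrier G) \<times> UNIV" by (simp add: wr_simps)
  have 1: "G \<cong> D_of (wr G) (carrier (wr G))"
    using emb_iso[OF subgroup_self derived_K[OF subgroup_self, symmetric]]
    by (simp add: D_of_def c)
  have 2: "\<exists>H1. subgroup H1 (wr G) \<and> G\<lparr>carrier := G1\<rparr> \<cong> D_of (wr G) H1" if "subgroup G1 G" for G1
    using that K_subgroup emb_iso[OF that derived_K[OF that, symmetric]]
    unfolding D_of_def by blast
  have 3: "\<exists>G1. subgroup G1 G \<and> D_of (wr G) H1 \<cong> G\<lparr>carrier := G1\<rparr>" if H1: "subgroup H1 (wr G)" for H1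
  proof -
    define T where "T = derived (wr G) H1"
    have Tsub: "subgroup T (wr G)" unfolding T_def
      using W.derived_is_subgroup[OF subgroup.subset[OF H1]] .
    have Te: "T \<subseteq> emb ` carrier G" unfolding T_def
      using derived_sub[OF subgroup.subset[OF H1]] .
    define G1 where "G1 = {a \<in> carrier G. emb a \<in> T}"
    have G1s: "subgroup G1 G"
    proof (rule subgroupI)
      show "G1 \<subseteq> carrier G" unfolding G1_def by auto
      have "emb \<one> = \<one>\<^bsub>wr G\<^esub>" by (simp add: emb_def wr_simps)
      then have "\<one> \<in> G1" unfolding G1_def using subgroup.one_closed[OF Tsub] by simp
      then show "G1 \<noteq> {}" by blast
      fix a assume "a \<in> G1"
      then show "inv a \<in> G1" unfolding G1_def
        using group_hom.hom_inv[OF emb_group_hom] subgroup.m_inv_closed[OF Tsub] by auto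
    next
      fix a b assume "a \<in> G1" "b \<in> G1"
      then show "a \<otimes> b \<in> G1" unfolding G1_def
        using emb_mult subgroup.m_closed[OF Tsub] by auto
    qed
    have "emb ` G1 = T" unfolding G1_def using Te by auto
    then have "G\<lparr>carrier := G1\<rparr> \<cong> D_of (wr G) H1"
      using emb_iso[OF G1s] unfolding D_of_def T_def by simp
    then have "D_of (wr G) H1 \<cong> G\<lparr>carrier := G1\<rparr>"
      using group.iso_sym[OF subgroup_imp_group[OF G1s]] by blast
    then show ?thesis using G1s by blast
  qed
  show ?thesis unfolding realises_def
    using 1 2 3 wr_group fin by (simp add: c)
qed

end

lemma iso_D:
  assumes phi: "\<phi> \<in> iso A B" and A: "group A" and B: "group B" and K: "K \<subseteq> carrier A"
  shows "D_of A K \<cong> D_of B (\<phi> ` K)"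
proof -
  have gh: "group_hom A B \<phi>" using phi A B
    by (simp add: group_hom_def group_hom_axioms_def iso_def)
  have "restrict \<phi> (derived A K) \<in> iso (A\<lparr>carrier := derived A K\<rparr>) (B\<lparr>carrier := \<phi> ` derived A K\<rparr>)"
    by (rule iso_restrict[OF phi A B group.derived_is_subgroup[OF A K]])
  moreover have "\<phi> ` derived A K = derived B (\<phi> ` K)"
    using group_hom.derived_img[OF gh K] by simp
  ultimately show ?thesis unfolding D_of_def by (metis is_isoI)
qed

lemma realises_transfer:
  fixes G :: "('a,'b) monoid_scheme" and H0 :: "'c monoid"
  assumes R: "realises G H0"
  shows "\<exists>H :: nat monoid. realises G H"
proof -
  have H0g: "group H0" and fin: "finite (carrier H0)" using R by (auto simp: realises_def)
  obtain f :: "'c \<Rightarrow> nat" and n where f: "f ` carrier H0 = {i. i < n}" "inj_on f (carrier H0)"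
    using finite_imp_inj_to_nat_seg[OF fin] by blast
  define g where "g = inv_into (carrier H0) f"
  define H :: "nat monoid" where "H = \<lparr>carrier = f ` carrier H0,
     monoid.mult = (\<lambda>x y. f (g x \<otimes>\<^bsub>H0\<^esub> g y)), monoid.one = f \<one>\<^bsub>H0\<^esub>\<rparr>"
  have fiso: "f \<in> iso H0 H"
    unfolding iso_def hom_def bij_betw_def H_def g_def
    using f(2) by (auto simp: inv_into_f_f group.is_monoid[OF H0g])
  have "group (H\<lparr>one := f \<one>\<^bsub>H0\<^esub>\<rparr>)" by (rule group.iso_imp_img_group[OF H0g fiso])
  moreover have "H\<lparr>one := f \<one>\<^bsub>H0\<^esub>\<rparr> = H" by (simp add: H_def)
  ultimately have Hg: "group H" by simp
  have cH: "carrier H = f ` carrier H0" by (simp add: H_def)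
  have ginv: "g \<in> iso H H0" unfolding g_def by (rule group.iso_set_sym[OF H0g fiso])
  have "G \<cong> D_of H0 (carrier H0)" using R by (simp add: realises_def)
  also have "D_of H0 (carrier H0) \<cong> D_of H (carrier H)"
    using iso_D[OF fiso H0g Hg order_refl] cH by simp
  finally have 1: "G \<cong> D_of H (carrier H)" .
  have 2: "\<exists>H1. subgroup H1 H \<and> G\<lparr>carrier := G1\<rparr> \<cong> D_of H H1" if G1: "subgroup G1 G" for G1
  proof -
    obtain H1 where H1: "subgroup H1 H0" "G\<lparr>carrier := G1\<rparr> \<cong> D_of H0 H1"
      using R G1 by (auto simp: realises_def)
    have "D_of H0 H1 \<cong> D_of H (f ` H1)"
      by (rule iso_D[OF fiso H0g Hg subgroup.subset[OF H1(1)]])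
    then have "G\<lparr>carrier := G1\<rparr> \<cong> D_of H (f ` H1)" using H1(2) iso_trans by blast
    moreover have "subgroup (f ` H1) H" using subgroup.iso_subgroup[OF H1(1) H0g Hg fiso] .
    ultimately show ?thesis by blast
  qed
  have 3: "\<exists>G1. subgroup G1 G \<and> D_of H H1 \<cong> G\<lparr>carrier := G1\<rparr>" if H1: "subgroup H1 H" for H1
  proof -
    have "subgroup (g ` H1) H0" using subgroup.iso_subgroup[OF H1 Hg H0g ginv] .
    then obtain G1 where G1: "subgroup G1 G" "D_of H0 (g ` H1) \<cong> G\<lparr>carrier := G1\<rparr>"
      using R by (auto simp: realises_def)
    have "D_of H H1 \<cong> D_of H0 (g ` H1)"
      by (rule iso_D[OF ginv Hg H0g subgroup.subset[OF H1]])
    then show ?thesis using G1 iso_trans by blast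
  qed
  have "realises G H" unfolding realises_def using Hg fin cH 1 2 3 by simp
  then show ?thesis by blast
qed

theorem theorem3p1:
  fixes G :: "('a, 'b) monoid_scheme"
  assumes "comm_group G" and "finite (carrier G)"
  shows "completely_D_realisable G"
proof -
  have "realises G (wr G)" by (rule comm_group.wr_realises[OF assms])
  then obtain H :: "nat monoid" where "realises G H" using realises_transfer by blast
  then show ?thesis unfolding completely_D_realisable_def realises_def by blast
qed

end
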